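(* Let $m$ be a positive integer and $p$ a prime, and let $\mathcal B\subset\mathbb F_p$ be as defined below. Then for any subset $B\subset\mathcal B$ with $|B|>p^{1/4}$ we have $|B-B|\ge p^{\beta/5}|B|$.
   Context: Set $\beta=1/(16m^2)$, $r=\lfloor\beta\log p/\log2\rfloor$, $M=2^{16m^2-1}$, and $\mathcal B=\left\{\sum_{j=1}^r x_j(2M)^{j-1}:\ x_1,\dots,x_r\in\{0,\dots,M-1\}\right\}$, viewed as a subset of $\mathbb F_p$ (all these integers are at most $p/2$). $B-B=\{b-b':b,b'\in B\}$ in $\mathbb F_p$. *)

theory Defs
  imports "HOL-Computational_Algebra.Primes" Complex_Main
begin

definition beta :: "nat \<Rightarrow> real" where
  "beta m = 1 / (16 * real m ^ 2)"

definition rpar :: "nat \<Rightarrow> nat \<Rightarrow> nat" where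
  "rpar m p = nat \<lfloor>beta m * ln (real p) / ln 2\<rfloor>"

definition Mpar :: "nat \<Rightarrow> nat" where
  "Mpar m = 2 ^ (16 * m ^ 2 - 1)"

text \<open>The set calB, as integers (all lie in [0, p/2], so they represent distinct
  residues mod p). Index j ranges over 0..r-1, corresponding to (2M)^(j-1) for j = 1..r.\<close>
definition calB :: "nat \<Rightarrow> nat \<Rightarrow> int set" where
  "calB m p = {(\<Sum>j<rpar m p. int (x j) * (2 * int (Mpar m)) ^ j) | x.
                 \<forall>j<rpar m p. x j < Mpar m}"

definition diffset_mod :: "nat \<Rightarrow> int set \<Rightarrow> int set" where
  "diffset_mod p B = {(b - b') mod int p | b b'. b \<in> B \<and> b' \<in> B}"

end

theory Submission
  imports Defs "HOL-Analysis.Convex"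
begin

lemma holder_sum:
  fixes f g :: "'a \<Rightarrow> real"
  assumes fin: "finite I" and ne: "I \<noteq> {}" and pos: "\<And>i. i \<in> I \<Longrightarrow> f i > 0 \<and> g i > 0"
    and l: "0 \<le> l" "l \<le> 1"
  shows "(\<Sum>i\<in>I. f i powr l * g i powr (1 - l)) \<le> (\<Sum>i\<in>I. f i) powr l * (\<Sum>i\<in>I. g i) powr (1 - l)"
proof -
  define F where "F = (\<Sum>i\<in>I. f i)"
  define G where "G = (\<Sum>i\<in>I. g i)"
  have F: "F > 0" unfolding F_def using fin ne pos by (intro sum_pos) auto
  have G: "G > 0" unfolding G_def using fin ne pos by (intro sum_pos) auto
  have "f i powr l * g i powr (1 - l) \<le> F powr l * G powr (1 - l) * (l * (f i / F) + (1 - l) * (g i / G))"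
    if i: "i \<in> I" for i
  proof -
    have "(f i / F) powr l * (g i / G) powr (1 - l) \<le> l * (f i / F) + (1 - l) * (g i / G)"
      using Youngs_inequality_0[of l "1 - l" "f i / F" "g i / G"] l pos[OF i] F G by auto
    moreover have "f i powr l * g i powr (1 - l) = F powr l * G powr (1 - l) * ((f i / F) powr l * (g i / G) powr (1 - l))"
      using pos[OF i] F G by (simp add: powr_divide)
    ultimately show ?thesis using F G by (simp add: mult_left_mono)
  qed
  hence "(\<Sum>i\<in>I. f i powr l * g i powr (1 - l)) \<le> (\<Sum>i\<in>I. F powr l * G powr (1 - l) * (l * (f i / F) + (1 - l) * (g i / G)))"
    by (intro sum_mono) auto
  also have "\<dots> = F powr l * G powr (1 - l) * (l * (\<Sum>i\<in>I. f i) / F + (1 - l) * (\<Sum>i\<in>I. g i) / G)"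
    by (simp add: sum_distrib_left sum.distrib sum_divide_distrib[symmetric] algebra_simps)
  also have "\<dots> = F powr l * G powr (1 - l)"
    using F G by (simp add: F_def[symmetric] G_def[symmetric])
  finally show ?thesis by (simp add: F_def G_def)
qed

lemma power_mean_aux:
  fixes a :: "'a \<Rightarrow> real"
  assumes fin: "finite S" and ne: "S \<noteq> {}" and pos: "\<And>s. s \<in> S \<Longrightarrow> a s > 0" and d: "0 < d"
  shows "(\<Sum>s\<in>S. a s) powr (1 + d) \<le> real (card S) powr d * (\<Sum>s\<in>S. a s powr (1 + d))"
proof -
  define l where "l = 1 / (1 + d)"
  have l: "0 \<le> l" "l \<le> 1" using d by (auto simp: l_def)
  have "(\<Sum>s\<in>S. (a s powr (1 + d)) powr l * 1 powr (1 - l)) \<le> (\<Sum>s\<in>S. a s powr (1 + d)) powr l * (\<Sum>s\<in>S. (1::real)) powr (1 - l)"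
    by (rule holder_sum[OF fin ne _ l]) (use pos in fastforce)
  moreover have "(a s powr (1 + d)) powr l * 1 powr (1 - l) = a s" if "s \<in> S" for s
    using pos[OF that] d by (simp add: powr_powr l_def)
  ultimately have h: "(\<Sum>s\<in>S. a s) \<le> (\<Sum>s\<in>S. a s powr (1 + d)) powr l * real (card S) powr (1 - l)"
    by simp
  have A0: "0 \<le> (\<Sum>s\<in>S. a s)" using pos by (intro sum_nonneg) (auto intro: less_imp_le)
  have "(\<Sum>s\<in>S. a s) powr (1 + d) \<le> ((\<Sum>s\<in>S. a s powr (1 + d)) powr l * real (card S) powr (1 - l)) powr (1 + d)"
    using h A0 d by (intro powr_mono2) auto
  also have "\<dots> = (\<Sum>s\<in>S. a s powr (1 + d)) * real (card S) powr d"
  proof -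
    have "(1 - l) * (1 + d) = d" "l * (1 + d) = 1" using d by (auto simp: l_def field_simps)
    moreover have "0 \<le> (\<Sum>s\<in>S. a s powr (1 + d))" by (intro sum_nonneg) auto
    ultimately show ?thesis
      by (simp add: powr_mult powr_powr)
  qed
  finally show ?thesis by (simp add: mult.commute)
qed

lemma lyapunov_aux:
  fixes a :: "'a \<Rightarrow> real"
  assumes fin: "finite S" and ne: "S \<noteq> {}" and pos: "\<And>s. s \<in> S \<Longrightarrow> a s > 0" and d: "0 < d" "d < 1"
  shows "(\<Sum>s\<in>S. a s) \<le> (\<Sum>s\<in>S. a s powr ((1 + d) / 2)) powr (2 * d / (1 + d)) * (\<Sum>s\<in>S. a s powr (1 + d)) powr (1 - 2 * d / (1 + d))"
proof -
  define l where "l = 2 * d / (1 + d)"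
  have l: "0 \<le> l" "l \<le> 1" using d by (auto simp: l_def)
  have "(\<Sum>s\<in>S. (a s powr ((1 + d) / 2)) powr l * (a s powr (1 + d)) powr (1 - l)) \<le> (\<Sum>s\<in>S. a s powr ((1 + d) / 2)) powr l * (\<Sum>s\<in>S. a s powr (1 + d)) powr (1 - l)"
    by (rule holder_sum[OF fin ne _ l]) (use pos in fastforce)
  moreover have "(a s powr ((1 + d) / 2)) powr l * (a s powr (1 + d)) powr (1 - l) = a s" if "s \<in> S" for s
  proof -
    have "(1 + d) / 2 * l + (1 + d) * (1 - l) = 1" using d by (simp add: l_def field_simps) (smt (verit) mult_pos_pos)
    thus ?thesis using pos[OF that] by (simp add: powr_powr flip: powr_add)
  qed
  ultimately show ?thesis by (simp add: l_def)
qed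

lemma poly8: fixes w :: real assumes "1 \<le> w" "w \<le> 7/4" shows "1 \<le> w ^ 8 * (2 - w)"
proof -
  define e where "e = w - 1"
  have e: "0 \<le> e" "e \<le> 3/4" using assms by (auto simp: e_def)
  have "1 + real 8 * e \<le> (1 + e) ^ 8" by (rule Bernoulli_inequality) (use e in auto)
  hence "(1 + 8 * e) * (1 - e) \<le> (1 + e) ^ 8 * (1 - e)" using e by (intro mult_right_mono) auto
  moreover have "1 \<le> (1 + 8 * e) * (1 - e)"
  proof -
    have "0 \<le> e * (7 - 8 * e)" using e by (intro mult_nonneg_nonneg) auto
    thus ?thesis by (simp add: algebra_simps)
  qed
  ultimately show ?thesis by (simp add: e_def)
qed

lemma R_main:
  fixes a b :: "'a \<Rightarrow> real" and d :: real
  assumes finS: "finite S" and finT: "finite T" and s0: "s0 \<in> S" "a s0 = 1" and t0: "t0 \<in> T" "b t0 = 1"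
    and apos: "\<And>s. s \<in> S \<Longrightarrow> 0 < a s" and bpos: "\<And>t. t \<in> T \<Longrightarrow> 0 < b t"
    and cS: "real (card S) powr d \<le> 7/4" and cT: "real (card T) powr d \<le> 7/4"
    and d: "0 < d" "d \<le> 1/20"
  shows "((\<Sum>s\<in>S. a s) * (\<Sum>t\<in>T. b t)) powr ((1 + d) / 2)
    \<le> max (\<Sum>s\<in>S. a s powr ((1 + d) / 2)) (max (\<Sum>t\<in>T. b t powr ((1 + d) / 2))
         ((\<Sum>s\<in>S. a s powr (1 + d)) + (\<Sum>t\<in>T. b t powr (1 + d)) - 1))"
proof -
  define A where "A = (\<Sum>s\<in>S. a s)"
  define B where "B = (\<Sum>t\<in>T. b t)"
  define P where "P = (\<Sum>s\<in>S. a s powr ((1 + d) / 2))"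
  define Q where "Q = (\<Sum>t\<in>T. b t powr ((1 + d) / 2))"
  define F where "F = (\<Sum>s\<in>S. a s powr (1 + d))"
  define G where "G = (\<Sum>t\<in>T. b t powr (1 + d))"
  define Z where "Z = (A * B) powr ((1 + d) / 2)"
  have neS: "S \<noteq> {}" and neT: "T \<noteq> {}" using s0 t0 by auto
  have A1: "1 \<le> A" unfolding A_def
    using member_le_sum[of s0 S a] s0 finS apos by (fastforce intro: less_imp_le)
  have B1: "1 \<le> B" unfolding B_def
    using member_le_sum[of t0 T b] t0 finT bpos by (fastforce intro: less_imp_le)
  have F0: "0 \<le> F" "0 \<le> G" unfolding F_def G_def by (auto intro: sum_nonneg)
  have P0: "0 \<le> P" "0 \<le> Q" unfolding P_def Q_def by (auto intro: sum_nonneg)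
  show ?thesis
  proof (cases "Z \<le> P \<or> Z \<le> Q")
    case True
    thus ?thesis by (auto simp: Z_def P_def Q_def A_def B_def)
  next
    case False
    hence PZ: "P < Z" and QZ: "Q < Z" by auto
    define X where "X = A powr (1 + d)"
    define Y where "Y = B powr (1 + d)"
    define \<gamma> where "\<gamma> = d / (1 - d)"
    have \<gamma>: "0 < \<gamma>" "\<gamma> \<le> 1/19" using d by (auto simp: \<gamma>_def field_simps)
    have X1: "1 \<le> X" "1 \<le> Y" using A1 B1 d by (auto simp: X_def Y_def ge_one_powr_ge_zero)
    have ZXY: "Z = (X * Y) powr (1/2)"
      using A1 B1 d by (simp add: Z_def X_def Y_def powr_mult powr_powr)
    have XF: "X \<le> 7/4 * F"
    proof -
      have "X \<le> real (card S) powr d * F"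
        using power_mean_aux[OF finS neS apos d(1)] by (simp add: X_def A_def F_def)
      also have "\<dots> \<le> 7/4 * F" using cS F0 by (intro mult_right_mono) auto
      finally show ?thesis .
    qed
    have YG: "Y \<le> 7/4 * G"
    proof -
      have "Y \<le> real (card T) powr d * G"
        using power_mean_aux[OF finT neT bpos d(1)] by (simp add: Y_def B_def G_def)
      also have "\<dots> \<le> 7/4 * G" using cT F0 by (intro mult_right_mono) auto
      finally show ?thesis .
    qed
    have key: "X \<le> Y' powr \<gamma> * F'"
      if A1: "1 \<le> A'" and B1: "1 \<le> B'" and F0: "0 \<le> F'"
        and ly: "A' \<le> P' powr (2 * d / (1 + d)) * F' powr (1 - 2 * d / (1 + d))"
        and PZ: "P' < (A' * B') powr ((1 + d) / 2)" and P0: "0 \<le> P'"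
        and XX: "X = A' powr (1 + d)" and YY: "Y' = B' powr (1 + d)"
      for A' B' F' P' X Y'
    proof -
      define l where "l = 2 * d / (1 + d)"
      have l: "0 < l" "l < 1" using d by (auto simp: l_def)
      have "P' powr l \<le> ((A' * B') powr ((1 + d) / 2)) powr l"
        using PZ P0 l by (intro powr_mono2) auto
      also have "\<dots> = (A' * B') powr d"
        using d by (simp add: powr_powr l_def)
      finally have "A' \<le> (A' * B') powr d * F' powr (1 - l)"
        using ly F0 by (simp add: l_def) (meson dual_order.trans mult_right_mono powr_ge_zero)
      hence "A' powr ((1 + d) / (1 - d)) \<le> ((A' * B') powr d * F' powr (1 - l)) powr ((1 + d) / (1 - d))"
        using A1 d by (intro powr_mono2) auto
      also have "\<dots> = (A' * B') powr (d * ((1 + d) / (1 - d))) * F'"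
      proof -
        have dd: "d * d \<le> 1/20 * (1/20)" using d by (intro mult_mono) auto
        have "(1 - l) * ((1 + d) / (1 - d)) = 1" using d dd by (simp add: l_def field_simps)
        hence "(F' powr (1 - l)) powr ((1 + d) / (1 - d)) = F' powr 1" by (simp only: powr_powr)
        hence "(F' powr (1 - l)) powr ((1 + d) / (1 - d)) = F'" using F0 by simp
        moreover have "((A' * B') powr d * F' powr (1 - l)) powr ((1 + d) / (1 - d))
           = ((A' * B') powr d) powr ((1 + d) / (1 - d)) * (F' powr (1 - l)) powr ((1 + d) / (1 - d))"
          by (rule powr_mult)
        ultimately show ?thesis by (simp add: powr_powr)
      qed
      also have "\<dots> = A' powr (\<gamma> * (1 + d)) * (Y' powr \<gamma> * F')"
        using A1 B1 d by (simp add: YY powr_mult powr_powr \<gamma>_def field_simps)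
      finally have h: "A' powr ((1 + d) / (1 - d)) \<le> A' powr (\<gamma> * (1 + d)) * (Y' powr \<gamma> * F')" .
      have "A' powr ((1 + d) / (1 - d)) = A' powr (\<gamma> * (1 + d)) * X"
      proof -
        have "(1 + d) / (1 - d) = \<gamma> * (1 + d) + (1 + d)" using d by (simp add: \<gamma>_def field_simps)
        thus ?thesis by (simp add: XX powr_add)
      qed
      with h have "A' powr (\<gamma> * (1 + d)) * X \<le> A' powr (\<gamma> * (1 + d)) * (Y' powr \<gamma> * F')" by simp
      moreover have "0 < A' powr (\<gamma> * (1 + d))" using A1 by simp
      ultimately show ?thesis by simp
    qed
    have XF2: "X \<le> Y powr \<gamma> * F"
      by (rule key[OF A1 B1 F0(1) _ _ P0(1)])
        (use lyapunov_aux[OF finS neS apos d(1)] d PZ in \<open>auto simp: A_def P_def F_def Z_def X_def Y_def\<close>)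
    have YG2: "Y \<le> X powr \<gamma> * G"
      by (rule key[OF B1 A1 F0(2) _ _ P0(2)])
        (use lyapunov_aux[OF finT neT bpos d(1)] d QZ in \<open>auto simp: B_def Q_def G_def Z_def X_def Y_def mult.commute\<close>)
    define W where "W = max X Y"
    define w where "w = min (W powr \<gamma>) (7/4)"
    have W1: "1 \<le> W" using X1 by (simp add: W_def)
    have w1: "1 \<le> w" "w \<le> 7/4" using W1 \<gamma> by (auto simp: w_def ge_one_powr_ge_zero)
    have Fw: "X \<le> w * F"
    proof (cases "W powr \<gamma> \<le> 7/4")
      case True
      hence "w = W powr \<gamma>" by (simp add: w_def)
      moreover have "Y powr \<gamma> \<le> W powr \<gamma>" using X1 \<gamma> by (intro powr_mono2) (auto simp: W_def)
      ultimately show ?thesis using XF2 F0 by (meson dual_order.trans mult_right_mono)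
    next
      case False thus ?thesis using XF by (simp add: w_def)
    qed
    have Gw: "Y \<le> w * G"
    proof (cases "W powr \<gamma> \<le> 7/4")
      case True
      hence "w = W powr \<gamma>" by (simp add: w_def)
      moreover have "X powr \<gamma> \<le> W powr \<gamma>" using X1 \<gamma> by (intro powr_mono2) (auto simp: W_def)
      ultimately show ?thesis using YG2 F0 by (meson dual_order.trans mult_right_mono)
    next
      case False thus ?thesis using YG by (simp add: w_def)
    qed
    have Zw: "w ^ 9 \<le> Z"
    proof -
      have "w ^ 9 \<le> (W powr \<gamma>) ^ 9" using w1 by (intro power_mono) (auto simp: w_def)
      also have "\<dots> = W powr (9 * \<gamma>)" using W1 by (simp add: powr_realpow[symmetric] powr_powr mult.commute)
      also have "\<dots> \<le> W powr (1/2)" using W1 \<gamma> by (intro powr_mono) auto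
      also have "\<dots> \<le> (X * Y) powr (1/2)"
        using X1 W1 by (intro powr_mono2) (auto simp: W_def max_def)
      finally show ?thesis by (simp add: ZXY)
    qed
    have AMGM: "2 * Z \<le> X + Y"
    proof -
      define sx where "sx = X powr (1/2)"
      define sy where "sy = Y powr (1/2)"
      have "X = sx ^ 2" "Y = sy ^ 2" using X1
        by (auto simp: sx_def sy_def powr_realpow[symmetric] powr_powr)
      moreover have "Z = sx * sy" using X1 by (simp add: ZXY sx_def sy_def powr_mult)
      ultimately show ?thesis using sum_squares_ge_zero[of "sx - sy" 0] by (simp add: power2_eq_square algebra_simps)
    qed
    have p8: "1 \<le> w ^ 8 * (2 - w)" by (rule poly8) (use w1 in auto)
    have "w \<le> w ^ 9 * (2 - w)"
    proof -
      have e9: "w ^ 9 = w * w ^ 8" using power_add[of w 1 8] by simp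
      show ?thesis using mult_left_mono[OF p8, of w] w1 unfolding e9 by (simp add: algebra_simps)
    qed
    also have "\<dots> \<le> Z * (2 - w)" using Zw w1 by (intro mult_right_mono) auto
    finally have c1: "w \<le> Z * (2 - w)" .
    have "Z * w \<le> 2 * Z - w" using c1 by (simp add: algebra_simps)
    also have "\<dots> \<le> X + Y - w" using AMGM by simp
    also have "\<dots> \<le> w * F + w * G - w" using Fw Gw by simp
    finally have "Z * w \<le> w * (F + G - 1)" by (simp add: algebra_simps)
    hence "Z \<le> F + G - 1" using w1 by (simp add: mult.commute)
    thus ?thesis by (simp add: Z_def A_def B_def F_def G_def)
  qed
qed

definition DS :: "int set \<Rightarrow> int set \<Rightarrow> int set" where
  "DS S T = (\<lambda>(s, t). s - t) ` (S \<times> T)"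

definition mxv :: "(int \<Rightarrow> int \<Rightarrow> real) \<Rightarrow> int set \<Rightarrow> int set \<Rightarrow> int \<Rightarrow> real" where
  "mxv f S T d = Max ((\<lambda>(s, t). f s t) ` {(s, t). s \<in> S \<and> t \<in> T \<and> s - t = d})"

lemma DS_I: "s \<in> S \<Longrightarrow> t \<in> T \<Longrightarrow> s - t \<in> DS S T"
  unfolding DS_def by force

lemma DS_E: "d \<in> DS S T \<Longrightarrow> (\<And>s t. s \<in> S \<Longrightarrow> t \<in> T \<Longrightarrow> d = s - t \<Longrightarrow> P) \<Longrightarrow> P"
  unfolding DS_def by force

lemma finite_DS: "finite S \<Longrightarrow> finite T \<Longrightarrow> finite (DS S T)"
  unfolding DS_def by simp

lemma DS_mono: "S' \<subseteq> S \<Longrightarrow> T' \<subseteq> T \<Longrightarrow> DS S' T' \<subseteq> DS S T"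
  unfolding DS_def by auto

lemma finite_pairs: "finite S \<Longrightarrow> finite T \<Longrightarrow> finite {(s, t). s \<in> S \<and> t \<in> T \<and> s - t = d}"
  by (rule finite_subset[of _ "S \<times> T"]) auto

lemma mxv_ge: "finite S \<Longrightarrow> finite T \<Longrightarrow> s \<in> S \<Longrightarrow> t \<in> T \<Longrightarrow> f s t \<le> mxv f S T (s - t)"
  unfolding mxv_def by (rule Max_ge) (auto intro: finite_pairs)

lemma mxv_attained:
  assumes "finite S" "finite T" "d \<in> DS S T"
  obtains s t where "s \<in> S" "t \<in> T" "s - t = d" "mxv f S T d = f s t"
proof -
  have ne: "{(s, t). s \<in> S \<and> t \<in> T \<and> s - t = d} \<noteq> {}" using assms(3) by (auto simp: DS_def)
  have "mxv f S T d \<in> (\<lambda>(s, t). f s t) ` {(s, t). s \<in> S \<and> t \<in> T \<and> s - t = d}"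
    unfolding mxv_def by (rule Max_in) (use ne assms in \<open>auto intro: finite_pairs\<close>)
  thus ?thesis using that by auto
qed

lemma card_DS:
  assumes "finite S" "finite T" "S \<noteq> {}" "T \<noteq> {}"
  shows "card S + card T \<le> card (DS S T) + 1"
proof -
  define sm where "sm = Max S"
  define tm where "tm = Max T"
  have sm: "sm \<in> S" "\<And>s. s \<in> S \<Longrightarrow> s \<le> sm" using assms by (auto simp: sm_def)
  have tm: "tm \<in> T" "\<And>t. t \<in> T \<Longrightarrow> t \<le> tm" using assms by (auto simp: tm_def)
  define U where "U = (\<lambda>s. s - tm) ` S"
  define V where "V = (\<lambda>t. sm - t) ` T"
  have cU: "card U = card S" unfolding U_def by (rule card_image) (auto simp: inj_on_def)
  have cV: "card V = card T" unfolding V_def by (rule card_image) (auto simp: inj_on_def)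
  have "U \<inter> V \<subseteq> {sm - tm}"
  proof
    fix x assume "x \<in> U \<inter> V"
    then obtain s t where "s \<in> S" "t \<in> T" "x = s - tm" "x = sm - t" by (auto simp: U_def V_def)
    thus "x \<in> {sm - tm}" using sm tm by force
  qed
  hence "card (U \<inter> V) \<le> 1" using card_mono[of "{sm - tm}" "U \<inter> V"] by auto
  moreover have "card (U \<union> V) + card (U \<inter> V) = card U + card V"
    using card_Un_Int[of U V] assms by (auto simp: U_def V_def)
  moreover have "U \<union> V \<subseteq> DS S T" using sm tm by (auto simp: U_def V_def intro: DS_I)
  hence "card (U \<union> V) \<le> card (DS S T)" by (intro card_mono finite_DS) (use assms in auto)
  ultimately show ?thesis using cU cV by linarith
qed

lemma CDF:
  assumes "finite S" "finite T" "s0 \<in> S" "u s0 = 1" "t0 \<in> T" "v t0 = 1"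
    "\<forall>s\<in>S. 0 < u s \<and> u s \<le> 1" "\<forall>t\<in>T. 0 < v t \<and> v t \<le> 1"
  shows "(\<Sum>s\<in>S. u s) + (\<Sum>t\<in>T. v t) - 1 \<le> (\<Sum>d\<in>DS S T. mxv (\<lambda>s t. min (u s) (v t)) S T d)"
  using assms
proof (induction "card S + card T" arbitrary: S T u v s0 t0 rule: less_induct)
  case less
  note finS = less.prems(1) and finT = less.prems(2) and s0 = less.prems(3,4) and t0 = less.prems(5,6)
    and ub = less.prems(7) and vb = less.prems(8)
  have neS: "S \<noteq> {}" and neT: "T \<noteq> {}" using s0 t0 by auto
  have finD: "finite (DS S T)" using finS finT by (rule finite_DS)
  have cD: "real (card S) + real (card T) - 1 \<le> real (card (DS S T))"
    using card_DS[OF finS finT neS neT] by linarith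
  show ?case
  proof (cases "(\<forall>s\<in>S. u s = 1) \<and> (\<forall>t\<in>T. v t = 1)")
    case True
    have "(\<Sum>d\<in>DS S T. (1::real)) \<le> (\<Sum>d\<in>DS S T. mxv (\<lambda>s t. min (u s) (v t)) S T d)"
    proof (rule sum_mono)
      fix d assume "d \<in> DS S T"
      then obtain s t where st: "s \<in> S" "t \<in> T" "d = s - t" by (auto elim: DS_E)
      show "1 \<le> mxv (\<lambda>s t. min (u s) (v t)) S T d"
        using mxv_ge[OF finS finT st(1,2), of "\<lambda>s t. min (u s) (v t)"] True st by auto
    qed
    moreover have "(\<Sum>s\<in>S. u s) = card S" "(\<Sum>t\<in>T. v t) = card T" using True by auto
    ultimately show ?thesis using cD by simp
  next
    case False
    define m where "m = Min (u ` S \<union> v ` T)"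
    have finUV: "finite (u ` S \<union> v ` T)" using finS finT by auto
    have m_le: "m \<le> u s" if "s \<in> S" for s using that finUV by (auto simp: m_def)
    have m_le': "m \<le> v t" if "t \<in> T" for t using that finUV by (auto simp: m_def)
    have m_in: "m \<in> u ` S \<union> v ` T" unfolding m_def by (rule Min_in) (use finUV neS in auto)
    have m0: "0 < m" using m_in ub vb by auto
    have m1: "m < 1"
    proof -
      from False obtain x where "(x \<in> S \<and> u x \<noteq> 1) \<or> (x \<in> T \<and> v x \<noteq> 1)" by auto
      thus ?thesis using m_le m_le' ub vb by force
    qed
    define S' where "S' = {s \<in> S. m < u s}"
    define T' where "T' = {t \<in> T. m < v t}"
    define u' where "u' = (\<lambda>s. (u s - m) / (1 - m))"
    define v' where "v' = (\<lambda>t. (v t - m) / (1 - m))"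
    have finS': "finite S'" "finite T'" using finS finT by (auto simp: S'_def T'_def)
    have s0': "s0 \<in> S'" "u' s0 = 1" using s0 m1 by (auto simp: S'_def u'_def)
    have t0': "t0 \<in> T'" "v' t0 = 1" using t0 m1 by (auto simp: T'_def v'_def)
    have ub': "\<forall>s\<in>S'. 0 < u' s \<and> u' s \<le> 1" using ub m1 by (auto simp: S'_def u'_def field_simps)
    have vb': "\<forall>t\<in>T'. 0 < v' t \<and> v' t \<le> 1" using vb m1 by (auto simp: T'_def v'_def field_simps)
    have lt: "card S' + card T' < card S + card T"
    proof -
      have "S' \<subseteq> S" "T' \<subseteq> T" by (auto simp: S'_def T'_def)
      hence c: "card S' \<le> card S" "card T' \<le> card T" using finS finT by (auto intro: card_mono)
      from m_in consider (a) x where "x \<in> S" "u x = m" | (b) x where "x \<in> T" "v x = m" by auto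
      thus ?thesis
      proof cases
        case a
        hence "S' \<subset> S" by (auto simp: S'_def)
        hence "card S' < card S" using finS by (simp add: psubset_card_mono)
        thus ?thesis using c by simp
      next
        case b
        hence "T' \<subset> T" by (auto simp: T'_def)
        hence "card T' < card T" using finT by (simp add: psubset_card_mono)
        thus ?thesis using c by simp
      qed
    qed
    have IH: "(\<Sum>s\<in>S'. u' s) + (\<Sum>t\<in>T'. v' t) - 1 \<le> (\<Sum>d\<in>DS S' T'. mxv (\<lambda>s t. min (u' s) (v' t)) S' T' d)"
      by (rule less.hyps[OF lt finS' s0' t0' ub' vb'])
    define g where "g = (\<lambda>d. mxv (\<lambda>s t. min (u' s) (v' t)) S' T' d)"
    have DSsub: "DS S' T' \<subseteq> DS S T" by (rule DS_mono) (auto simp: S'_def T'_def)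
    have pt: "m + (1 - m) * (if d \<in> DS S' T' then g d else 0) \<le> mxv (\<lambda>s t. min (u s) (v t)) S T d"
      if d: "d \<in> DS S T" for d
    proof (cases "d \<in> DS S' T'")
      case True
      obtain s t where st: "s \<in> S'" "t \<in> T'" "s - t = d"
          "mxv (\<lambda>s t. min (u' s) (v' t)) S' T' d = min (u' s) (v' t)"
        by (rule mxv_attained[OF finS'(1) finS'(2) True])
      hence st4: "g d = min (u' s) (v' t)" by (simp add: g_def)
      have sS: "s \<in> S" "t \<in> T" using st by (auto simp: S'_def T'_def)
      have pos: "0 < 1 - m" using m1 by simp
      have iff: "u' s \<le> v' t \<longleftrightarrow> u s \<le> v t" unfolding u'_def v'_def
        using pos by (simp add: divide_le_cancel)
      have "min (u' s) (v' t) = (min (u s) (v t) - m) / (1 - m)"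
        using iff by (cases "u s \<le> v t") (simp_all add: min_def u'_def v'_def)
      hence "m + (1 - m) * g d = min (u s) (v t)" using st4 m1 by simp
      also have "\<dots> \<le> mxv (\<lambda>s t. min (u s) (v t)) S T d"
        using mxv_ge[OF finS finT sS, of "\<lambda>s t. min (u s) (v t)"] st by simp
      finally show ?thesis using True by simp
    next
      case False
      from d obtain s t where st: "s \<in> S" "t \<in> T" "d = s - t" by (auto elim: DS_E)
      have "m \<le> min (u s) (v t)" using m_le m_le' st by auto
      also have "\<dots> \<le> mxv (\<lambda>s t. min (u s) (v t)) S T d"
        using mxv_ge[OF finS finT st(1,2), of "\<lambda>s t. min (u s) (v t)"] st by simp
      finally show ?thesis using False by simp
    qed
    have "(\<Sum>d\<in>DS S T. m + (1 - m) * (if d \<in> DS S' T' then g d else 0))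
        \<le> (\<Sum>d\<in>DS S T. mxv (\<lambda>s t. min (u s) (v t)) S T d)"
      by (rule sum_mono) (rule pt)
    moreover have "(\<Sum>d\<in>DS S T. m + (1 - m) * (if d \<in> DS S' T' then g d else 0))
        = m * card (DS S T) + (1 - m) * (\<Sum>d\<in>DS S' T'. g d)"
    proof -
      have "(\<Sum>d\<in>DS S T. (if d \<in> DS S' T' then g d else 0)) = (\<Sum>d\<in>DS S' T'. g d)"
        using DSsub finD by (simp add: sum.If_cases Int_absorb1 Int_absorb2)
      thus ?thesis by (simp add: sum.distrib sum_distrib_left[symmetric])
    qed
    moreover have "(1 - m) * (\<Sum>s\<in>S'. u' s) = (\<Sum>s\<in>S. u s) - m * card S"
    proof -
      have "(1 - m) * (\<Sum>s\<in>S'. u' s) = (\<Sum>s\<in>S'. u s - m)"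
        using m1 by (simp add: sum_distrib_left u'_def)
      also have "\<dots> = (\<Sum>s\<in>S. u s - m)"
        by (rule sum.mono_neutral_left) (use finS m_le in \<open>force simp: S'_def\<close>)+
      finally show ?thesis by (simp add: sum_subtractf)
    qed
    moreover have "(1 - m) * (\<Sum>t\<in>T'. v' t) = (\<Sum>t\<in>T. v t) - m * card T"
    proof -
      have "(1 - m) * (\<Sum>t\<in>T'. v' t) = (\<Sum>t\<in>T'. v t - m)"
        using m1 by (simp add: sum_distrib_left v'_def)
      also have "\<dots> = (\<Sum>t\<in>T. v t - m)"
        by (rule sum.mono_neutral_left) (use finT m_le' in \<open>force simp: T'_def\<close>)+
      finally show ?thesis by (simp add: sum_subtractf)
    qed
    moreover have "(1 - m) * ((\<Sum>s\<in>S'. u' s) + (\<Sum>t\<in>T'. v' t) - 1) \<le> (1 - m) * (\<Sum>d\<in>DS S' T'. g d)"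
      using IH m1 unfolding g_def by (intro mult_left_mono) auto
    hence "(1 - m) * (\<Sum>s\<in>S'. u' s) + (1 - m) * (\<Sum>t\<in>T'. v' t) - (1 - m) \<le> (1 - m) * (\<Sum>d\<in>DS S' T'. g d)"
      by (simp only: algebra_simps)
    moreover have "m * (real (card S) + real (card T) - 1) \<le> m * card (DS S T)"
      using cD m0 by (intro mult_left_mono) auto
    hence "m * real (card S) + m * real (card T) - m \<le> m * card (DS S T)"
      by (simp only: algebra_simps)
    ultimately show ?thesis by linarith
  qed
qed

lemma mxv_nonneg:
  assumes "finite S" "finite T" "D \<in> DS S T" "\<And>s t. 0 \<le> f s t"
  shows "0 \<le> mxv f S T D"
proof -
  from assms(3) obtain s t where st: "s \<in> S" "t \<in> T" "D = s - t" by (auto elim: DS_E)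
  show ?thesis using mxv_ge[OF assms(1,2) st(1,2), of f] assms(4)[of s t] st by simp
qed

lemma row_bound:
  assumes finS: "finite S" and finT: "finite T" and t0: "t0 \<in> T" and f0: "\<And>s t. 0 \<le> f s t"
  shows "(\<Sum>s\<in>S. f s t0) \<le> (\<Sum>D\<in>DS S T. mxv f S T D)"
proof -
  have "(\<Sum>s\<in>S. f s t0) \<le> (\<Sum>s\<in>S. mxv f S T (s - t0))"
    by (rule sum_mono) (rule mxv_ge[OF finS finT _ t0])
  also have "\<dots> = (\<Sum>D\<in>(\<lambda>s. s - t0) ` S. mxv f S T D)"
    by (rule sum.reindex[symmetric, unfolded comp_def]) (auto simp: inj_on_def)
  also have "\<dots> \<le> (\<Sum>D\<in>DS S T. mxv f S T D)"
    by (rule sum_mono2) (use finS finT t0 in \<open>auto intro: finite_DS DS_I mxv_nonneg f0\<close>)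
  finally show ?thesis .
qed

lemma col_bound:
  assumes finS: "finite S" and finT: "finite T" and s0: "s0 \<in> S" and f0: "\<And>s t. 0 \<le> f s t"
  shows "(\<Sum>t\<in>T. f s0 t) \<le> (\<Sum>D\<in>DS S T. mxv f S T D)"
proof -
  have "(\<Sum>t\<in>T. f s0 t) \<le> (\<Sum>t\<in>T. mxv f S T (s0 - t))"
    by (rule sum_mono) (rule mxv_ge[OF finS finT s0])
  also have "\<dots> = (\<Sum>D\<in>(\<lambda>t. s0 - t) ` T. mxv f S T D)"
    by (rule sum.reindex[symmetric, unfolded comp_def]) (auto simp: inj_on_def)
  also have "\<dots> \<le> (\<Sum>D\<in>DS S T. mxv f S T D)"
    by (rule sum_mono2) (use finS finT s0 in \<open>auto intro: finite_DS DS_I mxv_nonneg f0\<close>)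
  finally show ?thesis .
qed

lemma min_powr_le:
  fixes x y q :: real
  assumes "0 < x" "0 < y"
  shows "min (x powr (2 * q)) (y powr (2 * q)) \<le> (x * y) powr q"
proof (cases "x \<le> y")
  case True
  have "x powr q \<le> y powr q \<or> q < 0" using True assms by (meson not_less powr_mono2 less_imp_le)
  hence "min (x powr (2 * q)) (y powr (2 * q)) \<le> x powr q * y powr q"
  proof
    assume h: "x powr q \<le> y powr q"
    have "x powr (2 * q) = x powr q * x powr q" by (simp flip: powr_add)
    also have "\<dots> \<le> x powr q * y powr q" using h by (intro mult_left_mono) auto
    finally show ?thesis by simp
  next
    assume h: "q < 0"
    hence "y powr q \<le> x powr q" using True assms by (intro powr_mono2') auto
    have "y powr (2 * q) = y powr q * y powr q" by (simp flip: powr_add)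
    also have "\<dots> \<le> x powr q * y powr q" using \<open>y powr q \<le> x powr q\<close> by (intro mult_right_mono) auto
    finally show ?thesis by simp
  qed
  thus ?thesis using assms by (simp add: powr_mult)
next
  case False
  hence True': "y \<le> x" by simp
  have "y powr q \<le> x powr q \<or> q < 0" using True' assms by (meson not_less powr_mono2 less_imp_le)
  hence "min (x powr (2 * q)) (y powr (2 * q)) \<le> x powr q * y powr q"
  proof
    assume h: "y powr q \<le> x powr q"
    have "y powr (2 * q) = y powr q * y powr q" by (simp flip: powr_add)
    also have "\<dots> \<le> x powr q * y powr q" using h by (intro mult_right_mono) auto
    finally show ?thesis by simp
  next
    assume h: "q < 0"
    hence "x powr q \<le> y powr q" using True' assms by (intro powr_mono2') auto
    have "x powr (2 * q) = x powr q * x powr q" by (simp flip: powr_add)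
    also have "\<dots> \<le> x powr q * y powr q" using \<open>x powr q \<le> y powr q\<close> by (intro mult_left_mono) auto
    finally show ?thesis by simp
  qed
  thus ?thesis using assms by (simp add: powr_mult)
qed

lemma K_main:
  fixes a b :: "int \<Rightarrow> real" and d :: real and N :: nat
  assumes finS: "finite S" and finT: "finite T" and neS: "S \<noteq> {}" and neT: "T \<noteq> {}"
    and apos: "\<And>s. s \<in> S \<Longrightarrow> 0 < a s" and bpos: "\<And>t. t \<in> T \<Longrightarrow> 0 < b t"
    and cS: "card S \<le> N" and cT: "card T \<le> N" and Nd: "real N powr d \<le> 7/4"
    and d: "0 < d" "d \<le> 1/20"
  shows "((\<Sum>s\<in>S. a s) * (\<Sum>t\<in>T. b t)) powr ((1 + d) / 2)
    \<le> (\<Sum>D\<in>DS S T. mxv (\<lambda>s t. (a s * b t) powr ((1 + d) / 2)) S T D)"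
proof -
  define q where "q = (1 + d) / 2"
  define f where "f = (\<lambda>s t. (a s * b t) powr q)"
  define L where "L = (\<Sum>D\<in>DS S T. mxv f S T D)"
  define \<alpha> where "\<alpha> = Max (a ` S)"
  define \<beta> where "\<beta> = Max (b ` T)"
  have \<alpha>in: "\<alpha> \<in> a ` S" unfolding \<alpha>_def by (rule Max_in) (use finS neS in auto)
  have \<beta>in: "\<beta> \<in> b ` T" unfolding \<beta>_def by (rule Max_in) (use finT neT in auto)
  obtain s0 where s0: "s0 \<in> S" "a s0 = \<alpha>" using \<alpha>in by auto
  obtain t0 where t0: "t0 \<in> T" "b t0 = \<beta>" using \<beta>in by auto
  have \<alpha>0: "0 < \<alpha>" using s0 apos by auto
  have \<beta>0: "0 < \<beta>" using t0 bpos by auto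
  have ale: "a s \<le> \<alpha>" if "s \<in> S" for s using that finS by (auto simp: \<alpha>_def)
  have ble: "b t \<le> \<beta>" if "t \<in> T" for t using that finT by (auto simp: \<beta>_def)
  define a' where "a' = (\<lambda>s. a s / \<alpha>)"
  define b' where "b' = (\<lambda>t. b t / \<beta>)"
  have a'b: "0 < a' s" "a' s \<le> 1" if "s \<in> S" for s
    using apos[OF that] ale[OF that] \<alpha>0 by (auto simp: a'_def)
  have b'b: "0 < b' t" "b' t \<le> 1" if "t \<in> T" for t
    using bpos[OF that] ble[OF that] \<beta>0 by (auto simp: b'_def)
  have a's0: "a' s0 = 1" using s0 \<alpha>0 by (simp add: a'_def)
  have b't0: "b' t0 = 1" using t0 \<beta>0 by (simp add: b'_def)
  define c where "c = (\<alpha> * \<beta>) powr q"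
  have c0: "0 < c" using \<alpha>0 \<beta>0 by (simp add: c_def)
  have fdec: "f s t = c * (a' s * b' t) powr q" if "s \<in> S" "t \<in> T" for s t
  proof -
    have eq: "a s * b t = (\<alpha> * \<beta>) * (a' s * b' t)" using \<alpha>0 \<beta>0 by (simp add: a'_def b'_def)
    show ?thesis unfolding f_def c_def eq by (simp only: powr_mult mult_ac)
  qed
  have f0: "\<And>s t. 0 \<le> f s t" by (simp add: f_def)
  have cardpow: "real (card S) powr d \<le> 7/4" "real (card T) powr d \<le> 7/4"
  proof -
    have "real (card S) powr d \<le> real N powr d" "real (card T) powr d \<le> real N powr d"
      using cS cT d by (auto intro!: powr_mono2)
    thus "real (card S) powr d \<le> 7/4" "real (card T) powr d \<le> 7/4" using Nd by linarith+
  qed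
  have R: "((\<Sum>s\<in>S. a' s) * (\<Sum>t\<in>T. b' t)) powr q
    \<le> max (\<Sum>s\<in>S. a' s powr q) (max (\<Sum>t\<in>T. b' t powr q)
         ((\<Sum>s\<in>S. a' s powr (1 + d)) + (\<Sum>t\<in>T. b' t powr (1 + d)) - 1))"
  proof -
    have a'pos: "\<And>s. s \<in> S \<Longrightarrow> 0 < a' s" and b'pos: "\<And>t. t \<in> T \<Longrightarrow> 0 < b' t"
      using a'b b'b by auto
    show ?thesis unfolding q_def by (rule R_main[where a="a'" and b="b'", OF finS finT s0(1) a's0 t0(1) b't0 a'pos b'pos cardpow d])
  qed
  have L1: "c * (\<Sum>s\<in>S. a' s powr q) \<le> L"
  proof -
    have "c * (\<Sum>s\<in>S. a' s powr q) = (\<Sum>s\<in>S. f s t0)"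
      by (simp add: sum_distrib_left fdec s0 t0 b't0)
    also have "\<dots> \<le> L" unfolding L_def by (rule row_bound[OF finS finT t0(1) f0])
    finally show ?thesis .
  qed
  have L2: "c * (\<Sum>t\<in>T. b' t powr q) \<le> L"
  proof -
    have "c * (\<Sum>t\<in>T. b' t powr q) = (\<Sum>t\<in>T. f s0 t)"
      by (simp add: sum_distrib_left fdec s0 t0 a's0)
    also have "\<dots> \<le> L" unfolding L_def by (rule col_bound[OF finS finT s0(1) f0])
    finally show ?thesis .
  qed
  have L3: "c * ((\<Sum>s\<in>S. a' s powr (1 + d)) + (\<Sum>t\<in>T. b' t powr (1 + d)) - 1) \<le> L"
  proof -
    define u where "u = (\<lambda>s. a' s powr (1 + d))"
    define v where "v = (\<lambda>t. b' t powr (1 + d))"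
    have "(\<Sum>s\<in>S. u s) + (\<Sum>t\<in>T. v t) - 1 \<le> (\<Sum>D\<in>DS S T. mxv (\<lambda>s t. min (u s) (v t)) S T D)"
    proof (rule CDF[OF finS finT s0(1) _ t0(1)])
      show "u s0 = 1" "v t0 = 1" by (simp_all add: u_def v_def a's0 b't0)
      show "\<forall>s\<in>S. 0 < u s \<and> u s \<le> 1"
      proof
        fix s assume h: "s \<in> S"
        have "a' s powr (1 + d) \<le> a' s" by (rule powr_le_one_le) (use a'b[OF h] d in auto)
        thus "0 < u s \<and> u s \<le> 1" using a'b[OF h] by (simp add: u_def)
      qed
      show "\<forall>t\<in>T. 0 < v t \<and> v t \<le> 1"
      proof
        fix t assume h: "t \<in> T"
        have "b' t powr (1 + d) \<le> b' t" by (rule powr_le_one_le) (use b'b[OF h] d in auto)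
        thus "0 < v t \<and> v t \<le> 1" using b'b[OF h] by (simp add: v_def)
      qed
    qed
    hence "c * ((\<Sum>s\<in>S. u s) + (\<Sum>t\<in>T. v t) - 1) \<le> c * (\<Sum>D\<in>DS S T. mxv (\<lambda>s t. min (u s) (v t)) S T D)"
      using c0 by (intro mult_left_mono) auto
    also have "\<dots> = (\<Sum>D\<in>DS S T. c * mxv (\<lambda>s t. min (u s) (v t)) S T D)"
      by (simp add: sum_distrib_left)
    also have "\<dots> \<le> L" unfolding L_def
    proof (rule sum_mono)
      fix D assume D: "D \<in> DS S T"
      obtain s t where st: "s \<in> S" "t \<in> T" "s - t = D"
          "mxv (\<lambda>s t. min (u s) (v t)) S T D = min (u s) (v t)"
        by (rule mxv_attained[OF finS finT D])
      have "min (u s) (v t) \<le> (a' s * b' t) powr q"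
      proof -
        have "2 * q = 1 + d" by (simp add: q_def)
        thus ?thesis using min_powr_le[OF a'b(1)[OF st(1)] b'b(1)[OF st(2)], of q] by (simp add: u_def v_def)
      qed
      hence "c * min (u s) (v t) \<le> f s t" using c0 fdec[OF st(1,2)] by simp
      also have "\<dots> \<le> mxv f S T D" using mxv_ge[OF finS finT st(1,2), of f] st(3) by simp
      finally show "c * mxv (\<lambda>s t. min (u s) (v t)) S T D \<le> mxv f S T D" using st(4) by simp
    qed
    finally show ?thesis by (simp add: u_def v_def)
  qed
  have "((\<Sum>s\<in>S. a s) * (\<Sum>t\<in>T. b t)) powr q = c * ((\<Sum>s\<in>S. a' s) * (\<Sum>t\<in>T. b' t)) powr q"
  proof -
    have "(\<Sum>s\<in>S. a s) = \<alpha> * (\<Sum>s\<in>S. a' s)" using \<alpha>0 by (simp add: a'_def sum_distrib_left)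
    moreover have "(\<Sum>t\<in>T. b t) = \<beta> * (\<Sum>t\<in>T. b' t)" using \<beta>0 by (simp add: b'_def sum_distrib_left)
    ultimately show ?thesis using \<alpha>0 \<beta>0 by (simp add: c_def powr_mult mult_ac)
  qed
  also have "\<dots> \<le> L" using R L1 L2 L3 c0
    by (smt (verit, best) mult_left_mono)
  finally show ?thesis by (simp add: L_def f_def q_def)
qed

definition Dset :: "nat \<Rightarrow> nat \<Rightarrow> int set" where
  "Dset N r = {(\<Sum>j<r. int (x j) * (2 * int N) ^ j) | x. \<forall>j<r. x j < N}"

lemma Dset_0: "Dset N 0 = {0}"
  unfolding Dset_def by auto

lemma Dset_Suc:
  "z \<in> Dset N (Suc r) \<longleftrightarrow> (\<exists>s y. 0 \<le> s \<and> s < int N \<and> y \<in> Dset N r \<and> z = s + 2 * int N * y)"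
proof
  assume "z \<in> Dset N (Suc r)"
  then obtain x where x: "\<forall>j<Suc r. x j < N" "z = (\<Sum>j<Suc r. int (x j) * (2 * int N) ^ j)"
    unfolding Dset_def by auto
  have "z = int (x 0) + 2 * int N * (\<Sum>j<r. int (x (Suc j)) * (2 * int N) ^ j)"
    unfolding x(2) sum.lessThan_Suc_shift by (simp add: sum_distrib_left mult_ac)
  moreover have "(\<Sum>j<r. int (x (Suc j)) * (2 * int N) ^ j) \<in> Dset N r"
    unfolding Dset_def using x(1) by auto
  moreover have "int (x 0) < int N" using x(1) by auto
  moreover have "0 \<le> int (x 0)" by simp
  ultimately show "\<exists>s y. 0 \<le> s \<and> s < int N \<and> y \<in> Dset N r \<and> z = s + 2 * int N * y"
    by blast
next
  assume "\<exists>s y. 0 \<le> s \<and> s < int N \<and> y \<in> Dset N r \<and> z = s + 2 * int N * y"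
  then obtain s y where sy: "0 \<le> s" "s < int N" "y \<in> Dset N r" "z = s + 2 * int N * y" by auto
  from sy(3) obtain x where x: "\<forall>j<r. x j < N" "y = (\<Sum>j<r. int (x j) * (2 * int N) ^ j)"
    unfolding Dset_def by auto
  define x' where "x' = (\<lambda>j. if j = 0 then nat s else x (j - 1))"
  have "\<forall>j<Suc r. x' j < N" using x(1) sy by (auto simp: x'_def less_Suc_eq_0_disj)
  moreover have "z = (\<Sum>j<Suc r. int (x' j) * (2 * int N) ^ j)"
    unfolding sum.lessThan_Suc_shift using sy x by (simp add: x'_def sum_distrib_left mult_ac)
  ultimately show "z \<in> Dset N (Suc r)" unfolding Dset_def by blast
qed

lemma Dset_bound: "y \<in> Dset N r \<Longrightarrow> 0 \<le> y \<and> 2 * y < (2 * int N) ^ r"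
proof (induction r arbitrary: y)
  case 0 thus ?case by (simp add: Dset_0)
next
  case (Suc r)
  then obtain s y' where sy: "0 \<le> s" "s < int N" "y' \<in> Dset N r" "y = s + 2 * int N * y'"
    using Dset_Suc by blast
  have ih: "0 \<le> y'" "2 * y' + 1 \<le> (2 * int N) ^ r" using Suc.IH[OF sy(3)] by auto
  have "2 * int N * (2 * y') \<le> 2 * int N * ((2 * int N) ^ r - 1)"
    using ih sy by (intro mult_left_mono) auto
  hence "2 * y < (2 * int N) ^ Suc r" using sy by (simp add: algebra_simps)
  moreover have "0 \<le> y" using sy ih by simp
  ultimately show ?case by simp
qed

lemma finite_Dset: "finite (Dset N r)"
proof -
  have "Dset N r \<subseteq> {0..(2 * int N) ^ r}" using Dset_bound by fastforce
  thus ?thesis by (rule finite_subset) simp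
qed

lemma digit_inj:
  fixes s s' y y' :: int and N :: nat
  assumes "0 \<le> s" "s < int N" "0 \<le> s'" "s' < int N" "s + 2 * int N * y = s' + 2 * int N * y'"
  shows "s = s' \<and> y = y'"
proof -
  have "(s + 2 * int N * y) mod (2 * int N) = s mod (2 * int N)" by simp
  also have "\<dots> = s" using assms(1,2) by (intro mod_pos_pos_trivial) auto
  finally have "s = (s + 2 * int N * y) mod (2 * int N)" by simp
  also have "\<dots> = (s' + 2 * int N * y') mod (2 * int N)" by (simp only: assms(5))
  also have "\<dots> = s' mod (2 * int N)" by simp
  also have "\<dots> = s'" using assms(3,4) by (intro mod_pos_pos_trivial) auto
  finally have "s = s'" .
  thus ?thesis using assms by simp
qed

lemma T_main:
  fixes N :: nat and d :: real
  assumes N0: "0 < N" and Nd: "real N powr d \<le> 7/4" and d: "0 < d" "d \<le> 1/20"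
  shows "A \<subseteq> Dset N r \<Longrightarrow> B \<subseteq> Dset N r \<Longrightarrow> A \<noteq> {} \<Longrightarrow> B \<noteq> {} \<Longrightarrow>
    (real (card A) * real (card B)) powr ((1 + d) / 2) \<le> real (card (DS A B))"
proof (induction r arbitrary: A B)
  case 0
  hence "A = {0}" "B = {0}" by (auto simp: Dset_0)
  thus ?case by (simp add: DS_def)
next
  case (Suc r)
  note AD = Suc.prems(1) and BD = Suc.prems(2) and neA = Suc.prems(3) and neB = Suc.prems(4)
  define c where "c = 2 * int N"
  have c0: "0 < c" using N0 by (simp add: c_def)
  define fibA where "fibA = (\<lambda>s. {y \<in> Dset N r. s + c * y \<in> A})"
  define fibB where "fibB = (\<lambda>s. {y \<in> Dset N r. s + c * y \<in> B})"
  define S where "S = {s \<in> {0..<int N}. fibA s \<noteq> {}}"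
  define T where "T = {s \<in> {0..<int N}. fibB s \<noteq> {}}"
  have finA: "finite A" using AD finite_Dset finite_subset by blast
  have finB: "finite B" using BD finite_Dset finite_subset by blast
  have finS: "finite S" "finite T"
    by (rule finite_subset[of _ "{0..<int N}"], auto simp: S_def T_def)+
  have cS: "card S \<le> N" "card T \<le> N"
  proof -
    have "S \<subseteq> {0..<int N}" "T \<subseteq> {0..<int N}" by (auto simp: S_def T_def)
    hence "card S \<le> card {0..<int N}" "card T \<le> card {0..<int N}" by (meson card_mono finite_atLeastLessThan_int)+
    thus "card S \<le> N" "card T \<le> N" by auto
  qed
  have finfib: "finite (fibA s)" "finite (fibB s)" for s
    by (rule finite_subset[OF _ finite_Dset[of N r]], auto simp: fibA_def fibB_def)+
  have fibsub: "fibA s \<subseteq> Dset N r" "fibB s \<subseteq> Dset N r" for s by (auto simp: fibA_def fibB_def)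
  have decomp: "\<exists>s y. 0 \<le> s \<and> s < int N \<and> y \<in> Dset N r \<and> z = s + c * y" if "z \<in> Dset N (Suc r)" for z
    using that Dset_Suc[of z N r] by (simp add: c_def)
  have cardA: "card A = (\<Sum>s\<in>S. card (fibA s))"
  proof -
    have "bij_betw (\<lambda>(s, y). s + c * y) (Sigma S fibA) A"
    proof (rule bij_betwI')
      fix x y assume "x \<in> Sigma S fibA" "y \<in> Sigma S fibA"
      thus "((\<lambda>(s, y). s + c * y) x = (\<lambda>(s, y). s + c * y) y) = (x = y)"
        using digit_inj[of _ N] by (auto simp: S_def c_def)
    next
      fix x assume "x \<in> Sigma S fibA" thus "(\<lambda>(s, y). s + c * y) x \<in> A" by (auto simp: fibA_def)
    next
      fix z assume z: "z \<in> A"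
      then obtain s y where "0 \<le> s" "s < int N" "y \<in> Dset N r" "z = s + c * y" using decomp AD by blast
      thus "\<exists>x\<in>Sigma S fibA. z = (\<lambda>(s, y). s + c * y) x" using z
        by (intro bexI[of _ "(s, y)"]) (auto simp: S_def fibA_def)
    qed
    hence "card A = card (Sigma S fibA)" by (simp add: bij_betw_same_card)
    also have "\<dots> = (\<Sum>s\<in>S. card (fibA s))" using finS finfib by (simp add: card_SigmaI)
    finally show ?thesis .
  qed
  have cardB: "card B = (\<Sum>s\<in>T. card (fibB s))"
  proof -
    have "bij_betw (\<lambda>(s, y). s + c * y) (Sigma T fibB) B"
    proof (rule bij_betwI')
      fix x y assume "x \<in> Sigma T fibB" "y \<in> Sigma T fibB"
      thus "((\<lambda>(s, y). s + c * y) x = (\<lambda>(s, y). s + c * y) y) = (x = y)"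
        using digit_inj[of _ N] by (auto simp: T_def c_def)
    next
      fix x assume "x \<in> Sigma T fibB" thus "(\<lambda>(s, y). s + c * y) x \<in> B" by (auto simp: fibB_def)
    next
      fix z assume z: "z \<in> B"
      then obtain s y where "0 \<le> s" "s < int N" "y \<in> Dset N r" "z = s + c * y" using decomp BD by blast
      thus "\<exists>x\<in>Sigma T fibB. z = (\<lambda>(s, y). s + c * y) x" using z
        by (intro bexI[of _ "(s, y)"]) (auto simp: T_def fibB_def)
    qed
    hence "card B = card (Sigma T fibB)" by (simp add: bij_betw_same_card)
    also have "\<dots> = (\<Sum>s\<in>T. card (fibB s))" using finS finfib by (simp add: card_SigmaI)
    finally show ?thesis .
  qed
  have neS: "S \<noteq> {}" using cardA neA finA by auto
  have neT: "T \<noteq> {}" using cardB neB finB by auto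
  define a where "a = (\<lambda>s. real (card (fibA s)))"
  define b where "b = (\<lambda>s. real (card (fibB s)))"
  have apos: "0 < a s" if "s \<in> S" for s
    using that finfib by (auto simp: a_def S_def card_gt_0_iff)
  have bpos: "0 < b t" if "t \<in> T" for t
    using that finfib by (auto simp: b_def T_def card_gt_0_iff)
  have K: "((\<Sum>s\<in>S. a s) * (\<Sum>t\<in>T. b t)) powr ((1 + d) / 2)
    \<le> (\<Sum>D\<in>DS S T. mxv (\<lambda>s t. (a s * b t) powr ((1 + d) / 2)) S T D)"
    by (rule K_main[OF finS neS neT apos bpos cS Nd d])
  define Pc where "Pc = (\<lambda>D. {x \<in> DS A B. c dvd (x - D)})"
  have finDAB: "finite (DS A B)" using finA finB by (rule finite_DS)
  have finPc: "finite (Pc D)" for D using finDAB by (simp add: Pc_def)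
  have Pbound: "mxv (\<lambda>s t. (a s * b t) powr ((1 + d) / 2)) S T D \<le> real (card (Pc D))"
    if D: "D \<in> DS S T" for D
  proof -
    obtain s t where st: "s \<in> S" "t \<in> T" "s - t = D"
        "mxv (\<lambda>s t. (a s * b t) powr ((1 + d) / 2)) S T D = (a s * b t) powr ((1 + d) / 2)"
      by (rule mxv_attained[OF finS D])
    have ne: "fibA s \<noteq> {}" "fibB t \<noteq> {}" using st by (auto simp: S_def T_def)
    have IH: "(a s * b t) powr ((1 + d) / 2) \<le> real (card (DS (fibA s) (fibB t)))"
      unfolding a_def b_def by (rule Suc.IH[OF fibsub ne])
    have "card (DS (fibA s) (fibB t)) = card ((\<lambda>z. D + c * z) ` DS (fibA s) (fibB t))"
      using c0 by (intro card_image[symmetric]) (auto simp: inj_on_def)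
    also have "\<dots> \<le> card (Pc D)"
    proof (rule card_mono)
      show "finite (Pc D)" by (rule finPc)
      show "(\<lambda>z. D + c * z) ` DS (fibA s) (fibB t) \<subseteq> Pc D"
      proof
        fix x assume "x \<in> (\<lambda>z. D + c * z) ` DS (fibA s) (fibB t)"
        then obtain y y' where yy: "y \<in> fibA s" "y' \<in> fibB t" "x = D + c * (y - y')"
          by (auto elim!: DS_E)
        have "x = (s + c * y) - (t + c * y')" using yy st by (simp add: algebra_simps)
        moreover have "s + c * y \<in> A" "t + c * y' \<in> B" using yy by (auto simp: fibA_def fibB_def)
        ultimately have "x \<in> DS A B" by (auto intro: DS_I)
        moreover have "c dvd (x - D)" using yy by simp
        ultimately show "x \<in> Pc D" by (simp add: Pc_def)
      qed
    qed
    finally show ?thesis using IH st by simp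
  qed
  have Pdisj: "Pc D \<inter> Pc D' = {}" if DD: "D \<in> DS S T" "D' \<in> DS S T" "D \<noteq> D'" for D D'
  proof (rule ccontr)
    assume "Pc D \<inter> Pc D' \<noteq> {}"
    then obtain x where x: "x \<in> Pc D" "x \<in> Pc D'" by blast
    hence h1: "c dvd (x - D)" "c dvd (x - D')" by (simp_all add: Pc_def)
    have eq: "D' - D = (x - D) - (x - D')" by simp
    have dv: "c dvd (D' - D)" unfolding eq using h1 by (rule dvd_diff)
    have "D - D' \<noteq> 0" using DD by simp
    moreover have "\<bar>D - D'\<bar> < c"
    proof -
      obtain s t where st: "s \<in> S" "t \<in> T" "D = s - t" by (rule DS_E[OF DD(1)]) blast
      obtain s' t' where st': "s' \<in> S" "t' \<in> T" "D' = s' - t'" by (rule DS_E[OF DD(2)]) blast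
      have "0 \<le> s" "s < int N" "0 \<le> t" "t < int N" "0 \<le> s'" "s' < int N" "0 \<le> t'" "t' < int N"
        using st st' by (auto simp: S_def T_def)
      thus ?thesis unfolding st(3) st'(3) c_def by linarith
    qed
    ultimately show False
    proof -
      assume a1: "D - D' \<noteq> 0" and a2: "\<bar>D - D'\<bar> < c"
      have "\<bar>c\<bar> \<le> \<bar>D' - D\<bar>" by (rule dvd_imp_le_int) (use a1 dv in auto)
      thus False using a2 c0 by linarith
    qed
  qed
  have "(\<Sum>D\<in>DS S T. real (card (Pc D))) = real (card (\<Union>D\<in>DS S T. Pc D))"
  proof -
    have "card (\<Union>D\<in>DS S T. Pc D) = (\<Sum>D\<in>DS S T. card (Pc D))"
      by (rule card_UN_disjoint) (use finS finPc Pdisj in \<open>auto intro: finite_DS\<close>)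
    thus ?thesis by simp
  qed
  also have "\<dots> \<le> real (card (DS A B))"
    using finDAB by (auto intro!: card_mono simp: Pc_def)
  finally have fin1: "(\<Sum>D\<in>DS S T. real (card (Pc D))) \<le> real (card (DS A B))" .
  have "(\<Sum>D\<in>DS S T. mxv (\<lambda>s t. (a s * b t) powr ((1 + d) / 2)) S T D) \<le> real (card (DS A B))"
  proof -
    have "(\<Sum>D\<in>DS S T. mxv (\<lambda>s t. (a s * b t) powr ((1 + d) / 2)) S T D) \<le> (\<Sum>D\<in>DS S T. real (card (Pc D)))"
      by (rule sum_mono) (rule Pbound)
    thus ?thesis using fin1 by linarith
  qed
  moreover have "(\<Sum>s\<in>S. a s) = real (card A)" "(\<Sum>t\<in>T. b t) = real (card B)"
    by (simp_all add: cardA cardB a_def b_def)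
  ultimately show ?case using K by simp
qed

lemma two_powr_45: "(2::real) powr (4/5) \<le> 7/4"
proof -
  have "((2::real) powr (4/5)) ^ 5 = 2 powr 4"
    by (simp add: powr_realpow[symmetric] powr_powr)
  also have "\<dots> = 16" by simp
  also have "\<dots> \<le> (7/4) ^ 5" by (simp add: power_divide)
  finally show ?thesis by (subst (asm) power_mono_iff) auto
qed

lemma calB_eq: "calB m p = Dset (Mpar m) (rpar m p)"
  unfolding calB_def Dset_def by simp

lemma pow_le_p:
  assumes m: "m > 0" and p: "prime p"
  shows "(2 * int (Mpar m)) ^ rpar m p \<le> int p"
proof -
  have p2: "2 \<le> p" using p by (simp add: prime_ge_2_nat)
  have lnp: "0 < ln (real p)" using p2 by simp
  define k where "k = 16 * m ^ 2"
  have k1: "1 \<le> k" using m by (simp add: k_def)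
  have c: "2 * int (Mpar m) = 2 ^ k"
  proof -
    have "2 * (2::int) ^ (k - 1) = 2 ^ k" using k1 by (metis Suc_diff_le diff_Suc_1 power_Suc)
    thus ?thesis by (simp add: Mpar_def k_def)
  qed
  have "beta m * ln (real p) / ln 2 = ln (real p) / (real k * ln 2)"
    by (simp add: beta_def k_def)
  hence r: "real (rpar m p) \<le> ln (real p) / (real k * ln 2)"
    unfolding rpar_def using lnp by (simp add: of_nat_nat)
  have "real k * ln 2 > 0" using k1 by simp
  hence "real (rpar m p) * (real k * ln 2) \<le> ln (real p)" using r by (simp add: pos_le_divide_eq)
  hence h: "real k * real (rpar m p) * ln 2 \<le> ln (real p)" by (simp add: mult_ac)
  have "2 powr (real (k * rpar m p)) = exp (real k * real (rpar m p) * ln 2)"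
    by (simp add: powr_def mult_ac)
  also have "\<dots> \<le> exp (ln (real p))" using h by simp
  also have "\<dots> = real p" using p2 by simp
  finally have "2 powr (real (k * rpar m p)) \<le> real p" .
  moreover have "(2::real) powr real (k * rpar m p) = real ((2::nat) ^ (k * rpar m p))"
    by (subst powr_realpow) auto
  ultimately have "real ((2::nat) ^ (k * rpar m p)) \<le> real p" by simp
  hence "(2::nat) ^ (k * rpar m p) \<le> p" by (simp only: of_nat_le_iff)
  hence "int ((2::nat) ^ (k * rpar m p)) \<le> int p" by (simp only: of_nat_le_iff)
  hence "(2::int) ^ (k * rpar m p) \<le> int p" by simp
  thus ?thesis by (simp add: c power_mult)
qed

lemma Mpar_powr:
  assumes m: "m > 0"
  shows "real (Mpar m) powr (1 / (20 * real m ^ 2)) \<le> 7/4"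
proof -
  have m1: "1 \<le> real m" using m by simp
  have k1: "1 \<le> 16 * m ^ 2" using m by simp
  have "real (Mpar m) = 2 powr real (16 * m ^ 2 - 1)"
    by (simp add: Mpar_def powr_realpow)
  hence "real (Mpar m) powr (1 / (20 * real m ^ 2)) = 2 powr (real (16 * m ^ 2 - 1) / (20 * real m ^ 2))"
    by (simp add: powr_powr)
  also have "\<dots> \<le> 2 powr (4/5)"
  proof (rule powr_mono)
    have "real (16 * m ^ 2 - 1) = 16 * real m ^ 2 - 1" using k1 by (simp add: of_nat_diff)
    moreover have "0 < 20 * real m ^ 2" using m by simp
    ultimately show "real (16 * m ^ 2 - 1) / (20 * real m ^ 2) \<le> 4 / 5"
      by (simp add: divide_le_eq)
  qed simp
  also have "\<dots> \<le> 7/4" by (rule two_powr_45)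
  finally show ?thesis .
qed

theorem corollary3:
  fixes m p :: nat and B :: "int set"
  assumes "m > 0" and "prime p"
    and "B \<subseteq> calB m p"
    and "real (card B) > real p powr (1/4)"
  shows "real (card (diffset_mod p B)) \<ge> real p powr (beta m / 5) * real (card B)"
proof -
  note m = assms(1) and p = assms(2) and BB = assms(3) and cB = assms(4)
  define N where "N = Mpar m"
  define r where "r = rpar m p"
  define d where "d = 1 / (20 * real m ^ 2)"
  have N0: "0 < N" by (simp add: N_def Mpar_def)
  have BD: "B \<subseteq> Dset N r" using BB by (simp add: calB_eq N_def r_def)
  have finB: "finite B" using BD finite_Dset finite_subset by blast
  have p2: "2 \<le> p" using p by (simp add: prime_ge_2_nat)
  have cpos: "0 < real (card B)" using cB p2 by (smt (verit) powr_ge_zero)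
  hence neB: "B \<noteq> {}" by auto
  have d: "0 < d" "d \<le> 1/20" using m by (auto simp: d_def field_simps)
  have Nd: "real N powr d \<le> 7/4" using Mpar_powr[OF m] by (simp add: N_def d_def)
  have main: "(real (card B) * real (card B)) powr ((1 + d) / 2) \<le> real (card (DS B B))"
    by (rule T_main[OF N0 Nd d BD BD neB neB])
  have img: "diffset_mod p B = (\<lambda>x. x mod int p) ` DS B B"
    unfolding diffset_mod_def DS_def by auto
  have bnd: "0 \<le> b \<and> 2 * b < int p" if "b \<in> B" for b
  proof -
    have "0 \<le> b \<and> 2 * b < (2 * int N) ^ r" using Dset_bound BD that by blast
    moreover have "(2 * int N) ^ r \<le> int p" using pow_le_p[OF m p] by (simp add: N_def r_def)
    ultimately show ?thesis by linarith
  qed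
  have inj: "inj_on (\<lambda>x. x mod int p) (DS B B)"
  proof (rule inj_onI)
    fix x y assume x: "x \<in> DS B B" and y: "y \<in> DS B B" and eq: "x mod int p = y mod int p"
    obtain b1 b1' where b1: "b1 \<in> B" "b1' \<in> B" "x = b1 - b1'" by (rule DS_E[OF x]) blast
    obtain b2 b2' where b2: "b2 \<in> B" "b2' \<in> B" "y = b2 - b2'" by (rule DS_E[OF y]) blast
    have "\<bar>x - y\<bar> < int p" using bnd[OF b1(1)] bnd[OF b1(2)] bnd[OF b2(1)] bnd[OF b2(2)] b1 b2 by linarith
    moreover have "int p dvd (x - y)" using eq by (simp add: mod_eq_dvd_iff)
    ultimately show "x = y"
    proof -
      assume a: "\<bar>x - y\<bar> < int p" "int p dvd (x - y)"
      show "x = y"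
      proof (rule ccontr)
        assume "x \<noteq> y"
        hence "\<bar>int p\<bar> \<le> \<bar>x - y\<bar>" by (intro dvd_imp_le_int) (use a in auto)
        thus False using a by linarith
      qed
    qed
  qed
  have cardeq: "card (diffset_mod p B) = card (DS B B)" unfolding img using inj by (rule card_image)
  define c where "c = real (card B)"
  have c0: "0 < c" using cpos by (simp add: c_def)
  have EQ: "(c * c) powr ((1 + d) / 2) = c * c powr d"
  proof -
    have e: "(1 + d) / 2 + (1 + d) / 2 = 1 + d" by (simp add: field_simps)
    have "(c * c) powr ((1 + d) / 2) = c powr ((1 + d) / 2) * c powr ((1 + d) / 2)" by (rule powr_mult)
    also have "\<dots> = c powr ((1 + d) / 2 + (1 + d) / 2)" by (rule powr_add[symmetric])
    also have "\<dots> = c powr (1 + d)" by (simp only: e)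
    also have "\<dots> = c powr 1 * c powr d" by (rule powr_add)
    also have "\<dots> = c * c powr d" using c0 by simp
    finally show ?thesis .
  qed
  have LE: "real p powr (beta m / 5) \<le> c powr d"
  proof -
    have "real p powr (beta m / 5) = (real p powr (1/4)) powr d"
      by (simp add: powr_powr beta_def d_def field_simps)
    also have "\<dots> \<le> c powr d" using cB d by (intro powr_mono2) (auto simp: c_def)
    finally show ?thesis .
  qed
  have "real p powr (beta m / 5) * c \<le> c powr d * c" using LE c0 by (intro mult_right_mono) auto
  also have "\<dots> = (c * c) powr ((1 + d) / 2)" unfolding EQ by (rule mult.commute)
  also have "\<dots> \<le> real (card (DS B B))" using main unfolding c_def .
  finally have "real p powr (beta m / 5) * c \<le> real (card (DS B B))" .
  thus ?thesis by (simp add: cardeq c_def)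
qed

end
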